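(* Let $C_5$ be a spherical pentagon on $\mathbb{S}^2$ with vertices $\mathbf{p}_1,\dots,\mathbf{p}_5$ in cyclic order, all of whose five sides have length $\pi/3$, triangulated by the diagonals $\mathbf{p}_1\mathbf{p}_3$ and $\mathbf{p}_1\mathbf{p}_4$, both of length greater than $\pi/3$, into the triangles $\mathbf{p}_1\mathbf{p}_2\mathbf{p}_3$, $\mathbf{p}_1\mathbf{p}_3\mathbf{p}_4$, $\mathbf{p}_1\mathbf{p}_4\mathbf{p}_5$. Let $\alpha$ and $\beta$ be the angles at $\mathbf{p}_2$ in $\mathbf{p}_1\mathbf{p}_2\mathbf{p}_3$ and at $\mathbf{p}_5$ in $\mathbf{p}_1\mathbf{p}_4\mathbf{p}_5$, respectively; let $\alpha'$ and $\beta'$ be the angles at $\mathbf{p}_1$ in $\mathbf{p}_1\mathbf{p}_2\mathbf{p}_3$ and in $\mathbf{p}_1\mathbf{p}_4\mathbf{p}_5$, respectively; and let $\omega$ be the angle at $\mathbf{p}_1$ in $\mathbf{p}_1\mathbf{p}_3\mathbf{p}_4$ (opposite its side $\mathbf{p}_3\mathbf{p}_4$ of length $\pi/3$). If $\alpha,\beta\in\{2\pi-k\arccos(1/3): k=3,4\}$, then $\alpha'+\beta'+\omega\notin\{2\pi-k\arccos(1/3): k=1,2,3,4\}$.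
   Context: $\mathbb{S}^2$ is the unit sphere in $\mathbb{E}^3$ with spherical (geodesic) distance; sides are great-circle arcs. $\arccos(1/3)$ is the angle of a spherical equilateral triangle of side length $\pi/3$. *)

theory Defs
  imports "HOL-Analysis.Analysis"
begin

definition S2 :: "(real^3) set" where
  "S2 = sphere 0 1"

definition sph_dist :: "real^3 \<Rightarrow> real^3 \<Rightarrow> real" where
  "sph_dist x y = arccos (x \<bullet> y)"

definition vec_angle :: "real^3 \<Rightarrow> real^3 \<Rightarrow> real" where
  "vec_angle u v = arccos ((u \<bullet> v) / (norm u * norm v))"

text \<open>Interior angle at vertex b of the spherical triangle a b c: the angle between
  the tangent vectors at b of the great-circle arcs from b to a and from b to c.\<close>
definition sph_angle :: "real^3 \<Rightarrow> real^3 \<Rightarrow> real^3 \<Rightarrow> real" where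
  "sph_angle a b c = vec_angle (a - (a \<bullet> b) *\<^sub>R b) (c - (c \<bullet> b) *\<^sub>R b)"

end

theory Submission
  imports Defs
begin

lemma sqrt_eqI: "0 \<le> y \<Longrightarrow> y^2 = x \<Longrightarrow> sqrt x = (y::real)"
  by auto

lemma vec_angle_props:
  "0 \<le> vec_angle u v \<and> vec_angle u v \<le> pi \<and>
   cos (vec_angle u v) = (u \<bullet> v) / (norm u * norm v)"
proof -
  define y where "y = (u \<bullet> v) / (norm u * norm v)"
  have "\<bar>y\<bar> \<le> 1"
  proof (cases "norm u * norm v = 0")
    case True then show ?thesis by (auto simp: y_def)
  next
    case False
    then have pos: "norm u * norm v > 0" by (metis mult_nonneg_nonneg norm_ge_zero order_le_less)
    have "\<bar>u \<bullet> v\<bar> \<le> norm u * norm v" by (rule Cauchy_Schwarz_ineq2)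
    then show ?thesis using pos by (simp add: y_def abs_divide divide_le_eq_1)
  qed
  then show ?thesis unfolding vec_angle_def y_def[symmetric]
    by (simp add: arccos_lbound arccos_ubound)
qed

lemma unit_inner: "norm (a::real^3) = 1 \<Longrightarrow> a \<bullet> a = 1"
  by (metis power2_norm_eq_inner power_one)

lemma sph_angle_props:
  assumes "norm a = 1" "norm b = 1" "norm c = 1"
  shows "0 \<le> sph_angle a b c \<and> sph_angle a b c \<le> pi \<and>
    cos (sph_angle a b c) = (a \<bullet> c - (a \<bullet> b) * (c \<bullet> b)) /
       (sqrt (1 - (a \<bullet> b)^2) * sqrt (1 - (c \<bullet> b)^2))"
proof -
  have aa: "a \<bullet> a = 1" "b \<bullet> b = 1" "c \<bullet> c = 1" using assms unit_inner by auto
  have n1: "norm (a - (a \<bullet> b) *\<^sub>R b) = sqrt (1 - (a \<bullet> b)^2)"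
    unfolding norm_eq_sqrt_inner
    by (simp add: inner_diff_left inner_diff_right aa inner_commute power2_eq_square)
  have n2: "norm (c - (c \<bullet> b) *\<^sub>R b) = sqrt (1 - (c \<bullet> b)^2)"
    unfolding norm_eq_sqrt_inner
    by (simp add: inner_diff_left inner_diff_right aa inner_commute power2_eq_square)
  have i: "(a - (a \<bullet> b) *\<^sub>R b) \<bullet> (c - (c \<bullet> b) *\<^sub>R b) = a \<bullet> c - (a \<bullet> b) * (c \<bullet> b)"
    by (simp add: inner_diff_left inner_diff_right aa inner_commute algebra_simps)
  show ?thesis unfolding sph_angle_def using vec_angle_props n1 n2 i by metis
qed

lemma sph_dist_third:
  assumes "norm p = 1" "norm q = 1" "sph_dist p q = pi/3"
  shows "p \<bullet> q = 1/2"
proof -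
  have "\<bar>p \<bullet> q\<bar> \<le> 1" using Cauchy_Schwarz_ineq2[of p q] assms by simp
  then have "cos (sph_dist p q) = p \<bullet> q" unfolding sph_dist_def by simp
  then show ?thesis using assms cos_60 by simp
qed

lemma cosK:
  defines "K \<equiv> arccos (1/3)"
  shows "cos K = 1/3" "cos (2*K) = -7/9" "cos (3*K) = -23/27" "cos (4*K) = 17/81"
proof -
  show c1: "cos K = 1/3" unfolding K_def by simp
  show c2: "cos (2*K) = -7/9" by (simp add: cos_double_cos c1 power2_eq_square)
  have s: "(sin K)^2 = 8/9" unfolding sin_squared_eq c1 by (simp add: power2_eq_square)
  have "cos (3*K) = cos (2*K + K)" by simp
  also have "\<dots> = cos (2*K) * cos K - 2 * (sin K)^2 * cos K"
    by (simp only: cos_add sin_double) (simp add: power2_eq_square algebra_simps)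
  finally show "cos (3*K) = -23/27" using c1 c2 s by simp
  have "cos (4*K) = cos (2*(2*K))" by simp
  also have "\<dots> = 2 * cos (2*K) ^ 2 - 1" by (rule cos_double_cos)
  also have "\<dots> = 17/81" by (simp add: c2 power2_eq_square)
  finally show "cos (4*K) = 17/81" .
qed

lemma sin_from_cos: "0 \<le> t \<Longrightarrow> t \<le> pi \<Longrightarrow> sin t = sqrt (1 - (cos t)^2)"
  by (simp add: sin_ge_zero sin_squared_eq[symmetric])

lemma cA1: "(1/2 - (-7/18)/2)/(sqrt(3/4)* sqrt(1-(-7/18)^2)) = sqrt(25/33::real)"
  by (rule sym, rule sqrt_eqI) (simp_all add: power_divide power_mult_distrib)
lemma cA2: "(1/2 - (11/27)/2)/(sqrt(3/4)* sqrt(1-(11/27)^2)) = sqrt(8/57::real)"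
  by (rule sym, rule sqrt_eqI) (simp_all add: power_divide power_mult_distrib)
lemma W11: "(1/2 - (-7/18)*(-7/18))/(sqrt(1-(-7/18)^2)* sqrt(1-(-7/18)^2)) = (113/275::real)"
  by (simp add: power2_eq_square)
lemma W22: "(1/2 - (11/27)*(11/27))/(sqrt(1-(11/27)^2)* sqrt(1-(11/27)^2)) = (487/1216::real)"
  by (simp add: power2_eq_square)
lemma W12: "(1/2 - (-7/18)*(11/27))/(sqrt(1-(-7/18)^2)* sqrt(1-(11/27)^2)) = sqrt(128/209::real)"
  by (rule sym, rule sqrt_eqI) (simp_all add: power_divide power_mult_distrib)
lemma W21: "(1/2 - (11/27)*(-7/18))/(sqrt(1-(11/27)^2)* sqrt(1-(-7/18)^2)) = sqrt(128/209::real)"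
  by (rule sym, rule sqrt_eqI) (simp_all add: power_divide power_mult_distrib)

lemma sqrt3: "0 \<le> y \<Longrightarrow> y^2 = a*b*c \<Longrightarrow> 0 \<le> a \<Longrightarrow> 0 \<le> b \<Longrightarrow> 0 \<le> c
   \<Longrightarrow> sqrt a * sqrt b * sqrt (c::real) = y"
  by (metis real_sqrt_mult sqrt_eqI)

lemma sqrt_bounds: "0 \<le> l \<Longrightarrow> l^2 < q \<Longrightarrow> q < u^2 \<Longrightarrow> 0 \<le> u \<Longrightarrow> l < sqrt q \<and> sqrt q < (u::real)"
  by (metis real_less_rsqrt real_sqrt_abs abs_of_nonneg real_sqrt_less_mono)

lemma final:
  fixes a b A B W :: real
  assumes a: "a = -7/18 \<or> a = 11/27" and b: "b = -7/18 \<or> b = 11/27"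
    and A: "0 \<le> A" "A \<le> pi" "cos A = (1/2 - a/2)/(sqrt(3/4) * sqrt(1-a^2))"
    and B: "0 \<le> B" "B \<le> pi" "cos B = (1/2 - b/2)/(sqrt(3/4) * sqrt(1-b^2))"
    and W: "0 \<le> W" "W \<le> pi" "cos W = (1/2 - a*b)/(sqrt(1-a^2) * sqrt(1-b^2))"
  shows "cos (A+B+W) \<notin> {1/3, -7/9, -23/27, 17/81}"
proof -
  have expand: "cos (A+B+W) = (cos A * cos B - sin A * sin B) * cos W - (sin A * cos B + cos A * sin B) * sin W"
    by (simp add: cos_add sin_add)
  have sA: "sin A = sqrt (1 - (cos A)^2)" using A sin_from_cos by blast
  have sB: "sin B = sqrt (1 - (cos B)^2)" using B sin_from_cos by blast
  have sW: "sin W = sqrt (1 - (cos W)^2)" using W sin_from_cos by blast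
  consider "a = -7/18" "b = -7/18" | "a = -7/18" "b = 11/27" | "a = 11/27" "b = -7/18" | "a = 11/27" "b = 11/27"
    using a b by blast
  then show ?thesis
  proof cases
    case 1
    have cA: "cos A = sqrt(25/33)" using A(3) 1 cA1 by simp
    have cB: "cos B = sqrt(25/33)" using B(3) 1 cA1 by simp
    have cW: "cos W = 113/275" using W(3) 1 W11 by simp
    have sA': "sin A = sqrt(8/33)" using sA cA by simp
    have sB': "sin B = sqrt(8/33)" using sB cB by simp
    define P where "P = sqrt(8/33) * sqrt(25/33) * sqrt(1 - (113/275)^2)"
    have e: "cos (A+B+W) = 25/33*(113/275) - 8/33*(113/275) - 2 * P"
      unfolding expand sW cA cB cW sA' sB' P_def by (simp add: algebra_simps)
    have "P = sqrt (8/33 * (25/33) * (1 - (113/275)^2))" unfolding P_def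
      by (simp only: real_sqrt_mult)
    moreover have "3/10 < sqrt (8/33 * (25/33) * (1 - (113/275)^2)) \<and> sqrt (8/33 * (25/33) * (1 - (113/275)^2)) < 45/100"
      by (rule sqrt_bounds) (simp_all add: power2_eq_square)
    ultimately show ?thesis using e by auto
  next
    case 2
    have cA: "cos A = sqrt(25/33)" using A(3) 2 cA1 by simp
    have cB: "cos B = sqrt(8/57)" using B(3) 2 cA2 by simp
    have cW: "cos W = sqrt(128/209)" using W(3) 2 W12 by simp
    have sA': "sin A = sqrt(8/33)" using sA cA by simp
    have sB': "sin B = sqrt(49/57)" using sB cB by simp
    have sW': "sin W = sqrt(81/209)" using sW cW by simp
    have e: "cos (A+B+W) = sqrt(25/33)* sqrt(8/57)* sqrt(128/209) - sqrt(8/33)* sqrt(49/57)* sqrt(128/209)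
        - sqrt(8/33)* sqrt(8/57)* sqrt(81/209) - sqrt(25/33)* sqrt(49/57)* sqrt(81/209)"
      unfolding expand cA cB cW sA' sB' sW' by (simp add: algebra_simps)
    have p1: "sqrt(25/33)* sqrt(8/57)* sqrt(128/209) = (160/627::real)" by (rule sqrt3) (simp_all add: power2_eq_square)
    have p2: "sqrt(8/33)* sqrt(49/57)* sqrt(128/209) = (224/627::real)" by (rule sqrt3) (simp_all add: power2_eq_square)
    have p3: "sqrt(8/33)* sqrt(8/57)* sqrt(81/209) = (72/627::real)" by (rule sqrt3) (simp_all add: power2_eq_square)
    have p4: "sqrt(25/33)* sqrt(49/57)* sqrt(81/209) = (315/627::real)" by (rule sqrt3) (simp_all add: power2_eq_square)
    show ?thesis using e p1 p2 p3 p4 by auto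
  next
    case 3
    have cA: "cos A = sqrt(8/57)" using A(3) 3 cA2 by simp
    have cB: "cos B = sqrt(25/33)" using B(3) 3 cA1 by simp
    have cW: "cos W = sqrt(128/209)" using W(3) 3 W21 by simp
    have sA': "sin A = sqrt(49/57)" using sA cA by simp
    have sB': "sin B = sqrt(8/33)" using sB cB by simp
    have sW': "sin W = sqrt(81/209)" using sW cW by simp
    have e: "cos (A+B+W) = sqrt(25/33)* sqrt(8/57)* sqrt(128/209) - sqrt(8/33)* sqrt(49/57)* sqrt(128/209)
        - sqrt(8/33)* sqrt(8/57)* sqrt(81/209) - sqrt(25/33)* sqrt(49/57)* sqrt(81/209)"
      unfolding expand cA cB cW sA' sB' sW' by (simp add: algebra_simps)
    have p1: "sqrt(25/33)* sqrt(8/57)* sqrt(128/209) = (160/627::real)" by (rule sqrt3) (simp_all add: power2_eq_square)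
    have p2: "sqrt(8/33)* sqrt(49/57)* sqrt(128/209) = (224/627::real)" by (rule sqrt3) (simp_all add: power2_eq_square)
    have p3: "sqrt(8/33)* sqrt(8/57)* sqrt(81/209) = (72/627::real)" by (rule sqrt3) (simp_all add: power2_eq_square)
    have p4: "sqrt(25/33)* sqrt(49/57)* sqrt(81/209) = (315/627::real)" by (rule sqrt3) (simp_all add: power2_eq_square)
    show ?thesis using e p1 p2 p3 p4 by auto
  next
    case 4
    have cA: "cos A = sqrt(8/57)" using A(3) 4 cA2 by simp
    have cB: "cos B = sqrt(8/57)" using B(3) 4 cA2 by simp
    have cW: "cos W = 487/1216" using W(3) 4 W22 by simp
    have sA': "sin A = sqrt(49/57)" using sA cA by simp
    have sB': "sin B = sqrt(49/57)" using sB cB by simp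
    define P where "P = sqrt(49/57) * sqrt(8/57) * sqrt(1 - (487/1216)^2)"
    have e: "cos (A+B+W) = 8/57*(487/1216) - 49/57*(487/1216) - 2 * P"
      unfolding expand sW cA cB cW sA' sB' P_def by (simp add: algebra_simps)
    have "P = sqrt (49/57 * (8/57) * (1 - (487/1216)^2))" unfolding P_def
      by (simp only: real_sqrt_mult)
    moreover have "3/10 < sqrt (49/57 * (8/57) * (1 - (487/1216)^2)) \<and> sqrt (49/57 * (8/57) * (1 - (487/1216)^2)) < 1"
      by (rule sqrt_bounds) (simp_all add: power2_eq_square)
    ultimately show ?thesis using e by auto
  qed
qed

lemma cos_2pi_minus: "cos (2*pi - x) = cos x"
  by (simp add: cos_diff)

theorem lemma5:
  fixes p1 p2 p3 p4 p5 :: "real^3"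
  assumes on_sphere: "p1 \<in> S2" "p2 \<in> S2" "p3 \<in> S2" "p4 \<in> S2" "p5 \<in> S2"
    and sides: "sph_dist p1 p2 = pi/3" "sph_dist p2 p3 = pi/3" "sph_dist p3 p4 = pi/3"
               "sph_dist p4 p5 = pi/3" "sph_dist p5 p1 = pi/3"
    and diagonals: "sph_dist p1 p3 > pi/3" "sph_dist p1 p4 > pi/3"
    and alpha: "sph_angle p1 p2 p3 \<in> {2*pi - real k * arccos (1/3) | k. k \<in> {3,4}}"
    and beta: "sph_angle p1 p5 p4 \<in> {2*pi - real k * arccos (1/3) | k. k \<in> {3,4}}"
  shows "sph_angle p2 p1 p3 + sph_angle p4 p1 p5 + sph_angle p3 p1 p4
           \<notin> {2*pi - real k * arccos (1/3) | k. k \<in> {1,2,3,4}}"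
proof
  define K where "K = arccos (1/3)"
  have n: "norm p1 = 1" "norm p2 = 1" "norm p3 = 1" "norm p4 = 1" "norm p5 = 1"
    using on_sphere by (auto simp: S2_def)
  have x12: "p1 \<bullet> p2 = 1/2" "p2 \<bullet> p1 = 1/2" using sph_dist_third[OF n(1,2) sides(1)] inner_commute by metis+
  have x23: "p2 \<bullet> p3 = 1/2" "p3 \<bullet> p2 = 1/2" using sph_dist_third[OF n(2,3) sides(2)] inner_commute by metis+
  have x34: "p3 \<bullet> p4 = 1/2" "p4 \<bullet> p3 = 1/2" using sph_dist_third[OF n(3,4) sides(3)] inner_commute by metis+
  have x45: "p4 \<bullet> p5 = 1/2" "p5 \<bullet> p4 = 1/2" using sph_dist_third[OF n(4,5) sides(4)] inner_commute by metis+
  have x51: "p5 \<bullet> p1 = 1/2" "p1 \<bullet> p5 = 1/2" using sph_dist_third[OF n(5,1) sides(5)] inner_commute by metis+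
  define a where "a = p1 \<bullet> p3"
  define b where "b = p1 \<bullet> p4"
  have x13: "p3 \<bullet> p1 = a" using a_def inner_commute by metis
  have x14: "p4 \<bullet> p1 = b" using b_def inner_commute by metis
  have h: "1 - (1/2::real)^2 = 3/4" by (simp add: power2_eq_square)
  have ca: "cos (sph_angle p1 p2 p3) = (a - 1/4) / (3/4)"
    using sph_angle_props[OF n(1,2,3)] by (simp add: x12 x23 a_def[symmetric] power2_eq_square)
  have cb: "cos (sph_angle p1 p5 p4) = (b - 1/4) / (3/4)"
    using sph_angle_props[OF n(1,5,4)] by (simp add: x51 x45 b_def[symmetric] power2_eq_square)
  have kv: "cos (real k * K) \<in> {1/3, -7/9, -23/27, 17/81}" if "k \<in> {1,2,3,4}" for k :: nat
    using that cosK[folded K_def] by auto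
  from alpha obtain k where k: "k \<in> {3,4}" "sph_angle p1 p2 p3 = 2*pi - real k * K"
    unfolding K_def by blast
  then have "(a - 1/4) / (3/4) \<in> {-23/27, 17/81}" using ca cos_2pi_minus cosK[folded K_def] by auto
  then have a: "a = -7/18 \<or> a = 11/27" by auto
  from beta obtain k' where k': "k' \<in> {3,4}" "sph_angle p1 p5 p4 = 2*pi - real k' * K"
    unfolding K_def by blast
  then have "(b - 1/4) / (3/4) \<in> {-23/27, 17/81}" using cb cos_2pi_minus cosK[folded K_def] by auto
  then have b: "b = -7/18 \<or> b = 11/27" by auto
  have A: "0 \<le> sph_angle p2 p1 p3" "sph_angle p2 p1 p3 \<le> pi"
     "cos (sph_angle p2 p1 p3) = (1/2 - a/2)/(sqrt(3/4) * sqrt(1-a^2))"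
    using sph_angle_props[OF n(2,1,3)] by (simp_all add: x12 x23 x13 h)
  have B': "0 \<le> sph_angle p4 p1 p5" "sph_angle p4 p1 p5 \<le> pi"
     "cos (sph_angle p4 p1 p5) = (1/2 - b/2)/(sqrt(1-b^2) * sqrt(3/4))"
    using sph_angle_props[OF n(4,1,5)] by (simp_all add: x14 x45 x51 h)
  have B: "0 \<le> sph_angle p4 p1 p5" "sph_angle p4 p1 p5 \<le> pi"
     "cos (sph_angle p4 p1 p5) = (1/2 - b/2)/(sqrt(3/4) * sqrt(1-b^2))"
    using B' by (simp_all only: mult.commute[of "sqrt (1-b^2)" "sqrt (3/4)"])
  have W: "0 \<le> sph_angle p3 p1 p4" "sph_angle p3 p1 p4 \<le> pi"
     "cos (sph_angle p3 p1 p4) = (1/2 - a*b)/(sqrt(1-a^2) * sqrt(1-b^2))"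
    using sph_angle_props[OF n(3,1,4)] by (simp_all add: x13 x14 x34 h)
  have fin: "cos (sph_angle p2 p1 p3 + sph_angle p4 p1 p5 + sph_angle p3 p1 p4) \<notin> {1/3, -7/9, -23/27, 17/81}"
    by (rule final[OF a b A B W])
  assume "sph_angle p2 p1 p3 + sph_angle p4 p1 p5 + sph_angle p3 p1 p4
           \<in> {2*pi - real k * arccos (1/3) | k. k \<in> {1,2,3,4}}"
  then obtain j where j: "j \<in> {1,2,3,4}" "sph_angle p2 p1 p3 + sph_angle p4 p1 p5 + sph_angle p3 p1 p4 = 2*pi - real j * K"
    unfolding K_def by blast
  show False using fin kv[OF j(1)] j(2) cos_2pi_minus by metis
qed

end
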